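(* Let $f:X\to X$ be a piecewise contracting map on a compact, locally connected metric space $(X,d)$, with discontinuity set $\Delta$ and attractor $\Lambda$. If $\Delta=\emptyset$ or $d(\Lambda,\Delta)\neq0$, then $\Lambda$ is a finite union of periodic orbits of $f$.
   Context: A map $f:X\to X$ on a compact, locally connected metric space $(X,d)$ is piecewise contracting if there are $N\ge2$ non-empty, pairwise disjoint open sets $X_1,\dots,X_N$ with $X=\bigcup_i\overline{X_i}$, a constant $\lambda\in(0,1)$ with $d(f(x),f(y))\le\lambda d(x,y)$ for all $x,y$ in the same $X_i$, and such that $\tilde X:=\bigcap_{n\ge0}f^{-n}(X\setminus\Delta)\neq\emptyset$, where $\Delta:=X\setminus\bigcup_iX_i$ ($f$ is arbitrary on $\Delta$). For $A\subset X$ let $F_i(A):=\overline{f(A\cap X_i)}$; an atom of generation $n\ge1$ is a set $F_{i_n}\circ\cdots\circ F_{i_1}(X)$ with $i_1,\dots,i_n\in\{1,\dots,N\}$; $\Lambda_n$ is the union of all atoms of generation $n$ and the attractor is $\Lambda:=\bigcap_{n\ge1}\Lambda_n$. *)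

theory Defs
  imports "HOL-Analysis.Analysis"
begin

definition disc_set :: "'a set \<Rightarrow> nat \<Rightarrow> (nat \<Rightarrow> 'a set) \<Rightarrow> 'a set" where
  "disc_set X N P = X - (\<Union>i\<in>{1..N}. P i)"

definition piecewise_contracting ::
  "'a::metric_space set \<Rightarrow> ('a \<Rightarrow> 'a) \<Rightarrow> nat \<Rightarrow> (nat \<Rightarrow> 'a set) \<Rightarrow> real \<Rightarrow> bool" where
  "piecewise_contracting X f N P lam \<longleftrightarrow>
     f ` X \<subseteq> X \<and>
     N \<ge> 2 \<and>
     (\<forall>i\<in>{1..N}. openin (top_of_set X) (P i) \<and> P i \<noteq> {}) \<and>
     (\<forall>i\<in>{1..N}. \<forall>j\<in>{1..N}. i \<noteq> j \<longrightarrow> P i \<inter> P j = {}) \<and>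
     X = (\<Union>i\<in>{1..N}. closure (P i)) \<and>
     0 < lam \<and> lam < 1 \<and>
     (\<forall>i\<in>{1..N}. \<forall>x\<in>P i. \<forall>y\<in>P i. dist (f x) (f y) \<le> lam * dist x y) \<and>
     {x\<in>X. \<forall>n. (f ^^ n) x \<notin> disc_set X N P} \<noteq> {}"

definition F_map :: "('a::metric_space \<Rightarrow> 'a) \<Rightarrow> (nat \<Rightarrow> 'a set) \<Rightarrow> nat \<Rightarrow> 'a set \<Rightarrow> 'a set" where
  "F_map f P i A = closure (f ` (A \<inter> P i))"

fun atoms :: "'a::metric_space set \<Rightarrow> ('a \<Rightarrow> 'a) \<Rightarrow> nat \<Rightarrow> (nat \<Rightarrow> 'a set) \<Rightarrow> nat \<Rightarrow> 'a set set" where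
  "atoms X f N P 0 = {X}"
| "atoms X f N P (Suc n) = {F_map f P i A | i A. i \<in> {1..N} \<and> A \<in> atoms X f N P n}"

definition Lambda_n :: "'a::metric_space set \<Rightarrow> ('a \<Rightarrow> 'a) \<Rightarrow> nat \<Rightarrow> (nat \<Rightarrow> 'a set) \<Rightarrow> nat \<Rightarrow> 'a set" where
  "Lambda_n X f N P n = \<Union>(atoms X f N P n)"

definition attractor :: "'a::metric_space set \<Rightarrow> ('a \<Rightarrow> 'a) \<Rightarrow> nat \<Rightarrow> (nat \<Rightarrow> 'a set) \<Rightarrow> 'a set" where
  "attractor X f N P = (\<Inter>n\<in>{1..}. Lambda_n X f N P n)"

definition periodic_point :: "('a \<Rightarrow> 'a) \<Rightarrow> 'a \<Rightarrow> bool" where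
  "periodic_point f x \<longleftrightarrow> (\<exists>p>0. (f ^^ p) x = x)"

definition orbit :: "('a \<Rightarrow> 'a) \<Rightarrow> 'a \<Rightarrow> 'a set" where
  "orbit f x = {(f ^^ k) x | k. True}"

end

theory Submission
  imports Defs
begin

lemma finite_pairdists:
  fixes T :: "'a::metric_space set"
  assumes T: "finite T"
  shows "finite {dist x y | x y. x \<in> T \<and> y \<in> T \<and> x \<noteq> y}"
proof -
  have "finite {dist x y | x y. x \<in> T \<and> y \<in> T}" using T by (intro finite_image_set2) auto
  then show ?thesis by (rule rev_finite_subset) blast
qed

lemma atoms_Suc_image:
  "atoms X f N P (Suc m) = (\<lambda>(i,A). F_map f P i A) ` ({1..N} \<times> atoms X f N P m)"
  by force

lemma atoms_finite: "finite (atoms X f N P m)"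
  by (induction m) (auto simp: atoms_Suc_image simp del: atoms.simps(2))

lemma atoms_subset:
  assumes "f ` X \<subseteq> X" "closed X"
  shows "A \<in> atoms X f N P m \<Longrightarrow> A \<subseteq> X"
proof (induction m arbitrary: A)
  case 0 then show ?case by simp
next
  case (Suc m)
  then obtain i B where A: "A = F_map f P i B" "B \<in> atoms X f N P m" by auto
  have "f ` (B \<inter> P i) \<subseteq> X" using Suc.IH[OF A(2)] assms(1) by blast
  then show ?case using A(1) assms(2) by (simp add: F_map_def closure_minimal)
qed

lemma atoms_closed:
  assumes "closed X"
  shows "A \<in> atoms X f N P m \<Longrightarrow> closed A"
  by (cases m) (auto simp: assms F_map_def)

lemma pw_closure:
  assumes "\<forall>x\<in>S. \<forall>y\<in>S. dist x y \<le> c"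
  shows "\<forall>x\<in>closure S. \<forall>y\<in>closure S. dist x y \<le> c"
proof -
  have 1: "closure S \<subseteq> cball y c" if "y \<in> S" for y
    using assms that by (intro closure_minimal) (auto simp: dist_commute)
  have "closure S \<subseteq> cball x c" if "x \<in> closure S" for x
    using 1 that by (intro closure_minimal) (auto simp: dist_commute subset_iff)
  then show ?thesis by (meson mem_cball subsetD)
qed

lemma atoms_pw:
  assumes contr: "\<forall>i\<in>{1..N}. \<forall>x\<in>P i. \<forall>y\<in>P i. dist (f x) (f y) \<le> lam * dist x y"
    and lam: "lam \<ge> 0" and D: "\<forall>x\<in>X. \<forall>y\<in>X. dist x y \<le> D"
  shows "A \<in> atoms X f N P m \<Longrightarrow> \<forall>x\<in>A. \<forall>y\<in>A. dist x y \<le> lam ^ m * D"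
proof (induction m arbitrary: A)
  case 0 then show ?case using D by simp
next
  case (Suc m)
  then obtain i B where A: "A = F_map f P i B" "B \<in> atoms X f N P m" "i \<in> {1..N}" by auto
  have "\<forall>x\<in>f ` (B \<inter> P i). \<forall>y\<in>f ` (B \<inter> P i). dist x y \<le> lam ^ Suc m * D"
  proof (intro ballI)
    fix x y assume "x \<in> f ` (B \<inter> P i)" "y \<in> f ` (B \<inter> P i)"
    then obtain u v where uv: "u \<in> B \<inter> P i" "v \<in> B \<inter> P i" "x = f u" "y = f v" by auto
    have "dist x y \<le> lam * dist u v" using contr A(3) uv by auto
    also have "\<dots> \<le> lam * (lam ^ m * D)"
      using Suc.IH[OF A(2)] uv lam by (intro mult_left_mono) auto
    finally show "dist x y \<le> lam ^ Suc m * D" by simp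
  qed
  then show ?case using A(1) pw_closure unfolding F_map_def by blast
qed

lemma F_map_mono: "A \<subseteq> B \<Longrightarrow> F_map f P i A \<subseteq> F_map f P i B"
  unfolding F_map_def by (intro closure_mono image_mono) auto

lemma atoms_refine:
  assumes "f ` X \<subseteq> X" "closed X"
  shows "A \<in> atoms X f N P (Suc m) \<Longrightarrow> \<exists>B\<in>atoms X f N P m. A \<subseteq> B"
proof (induction m arbitrary: A)
  case 0
  then show ?case using atoms_subset[OF assms, of A N P "Suc 0"] by simp
next
  case (Suc m)
  then obtain i B where A: "A = F_map f P i B" "B \<in> atoms X f N P (Suc m)" "i \<in> {1..N}" by auto
  obtain C where "C \<in> atoms X f N P m" "B \<subseteq> C" using Suc.IH[OF A(2)] by blast
  then show ?case using A F_map_mono[OF \<open>B \<subseteq> C\<close>, of f P i] by auto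
qed

lemma Lambda_dec:
  assumes "f ` X \<subseteq> X" "closed X"
  shows "Lambda_n X f N P (Suc m) \<subseteq> Lambda_n X f N P m"
  using atoms_refine[OF assms] unfolding Lambda_n_def by blast

lemma compact_dec_eventually:
  fixes K :: "nat \<Rightarrow> 'a::metric_space set"
  assumes dec: "\<And>m. K (Suc m) \<subseteq> K m" and cpt: "\<And>m. compact (K m)"
    and U: "open U" "\<Inter>(range K) \<subseteq> U"
  shows "\<exists>m. K m \<subseteq> U"
proof (rule ccontr)
  assume neg: "\<not> ?thesis"
  have dle: "K n \<subseteq> K j" if "j \<le> n" for j n
    using lift_Suc_antimono_le[of K, OF dec that] .
  have cl: "\<forall>a\<in>range (\<lambda>m. K m - U). closed a"
    using cpt U(1) by (auto intro!: closed_Diff compact_imp_closed[of "K _"])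
  have "\<forall>B \<subseteq> range (\<lambda>m. K m - U). finite B \<longrightarrow> K 0 \<inter> \<Inter>B \<noteq> {}"
  proof (intro allI impI)
    fix B assume B: "B \<subseteq> range (\<lambda>m. K m - U)" "finite B"
    then obtain M where M: "finite M" "B = (\<lambda>m. K m - U) ` M"
      by (meson finite_subset_image)
    define n where "n = Max (insert 0 M)"
    have "K n - U \<subseteq> K 0 \<inter> \<Inter>B"
    proof -
      have "K n \<subseteq> K 0" using dle by simp
      moreover have "K n - U \<subseteq> K j - U" if "j \<in> M" for j
        using dle[of j n] that M(1) unfolding n_def by auto
      ultimately show ?thesis using M(2) by auto
    qed
    moreover have "K n - U \<noteq> {}" using neg by auto
    ultimately show "K 0 \<inter> \<Inter>B \<noteq> {}" by blast
  qed
  then have "K 0 \<inter> \<Inter>(range (\<lambda>m. K m - U)) \<noteq> {}"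
    using cpt[of 0] cl unfolding compact_fip by blast
  then show False using U(2) by auto
qed


theorem theorem3:
  fixes X :: "'a::metric_space set" and f :: "'a \<Rightarrow> 'a"
    and N :: nat and P :: "nat \<Rightarrow> 'a set" and lam :: real
  assumes "compact X"
    and "locally connected X"
    and "piecewise_contracting X f N P lam"
    and "disc_set X N P = {} \<or> setdist (attractor X f N P) (disc_set X N P) \<noteq> 0"
  shows "\<exists>S. finite S \<and> (\<forall>x\<in>S. x \<in> X \<and> periodic_point f x) \<and>
             attractor X f N P = (\<Union>x\<in>S. orbit f x)"
proof -
  note pc = assms(3)[unfolded piecewise_contracting_def]
  have fX: "f ` X \<subseteq> X" using pc by blast
  have opn: "\<forall>i\<in>{1..N}. openin (top_of_set X) (P i)" using pc by blast
  have disj: "\<And>i j. i\<in>{1..N} \<Longrightarrow> j\<in>{1..N} \<Longrightarrow> i \<noteq> j \<Longrightarrow> P i \<inter> P j = {}" using pc by blast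
  have lam0: "0 \<le> lam" and lam1: "lam < 1" using pc by auto
  have contr: "\<forall>i\<in>{1..N}. \<forall>x\<in>P i. \<forall>y\<in>P i. dist (f x) (f y) \<le> lam * dist x y"
    using pc by blast
  have clX: "closed X" using assms(1) compact_imp_closed by blast
  define L where "L = Lambda_n X f N P"
  define Lam where "Lam = attractor X f N P"
  define Del where "Del = disc_set X N P"
  have PX: "P i \<subseteq> X" if "i \<in> {1..N}" for i
    using opn that openin_subset by fastforce
  have Lsub: "L m \<subseteq> X" for m
    unfolding L_def Lambda_n_def using atoms_subset[OF fX clX] by blast
  have Lcpt: "compact (L m)" for m
  proof -
    have "closed (L m)" unfolding L_def Lambda_n_def
      using atoms_finite atoms_closed[OF clX] by blast
    then have "compact (X \<inter> L m)" using assms(1) compact_Int_closed by blast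
    then show ?thesis using Lsub by (simp add: Int_absorb1)
  qed
  have Ldec: "L (Suc m) \<subseteq> L m" for m unfolding L_def using Lambda_dec[OF fX clX] .
  have Ldle: "L m \<subseteq> L j" if "j \<le> m" for j m
    using lift_Suc_antimono_le[of L, OF Ldec that] .
  have L0: "L 0 = X" by (simp add: L_def Lambda_n_def)
  have LamR: "Lam = \<Inter>(range L)"
  proof
    show "\<Inter>(range L) \<subseteq> Lam" unfolding Lam_def attractor_def L_def by auto
    show "Lam \<subseteq> \<Inter>(range L)"
    proof
      fix x assume x: "x \<in> Lam"
      have xm: "x \<in> L m" if "m \<ge> 1" for m using x that unfolding Lam_def attractor_def L_def by auto
      moreover have "x \<in> L 0" using Ldec[of 0] xm[of 1] by auto
      ultimately show "x \<in> \<Inter>(range L)" by (metis (full_types) INT_I le_add1 not0_implies_Suc plus_1_eq_Suc)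
    qed
  qed
  have LamL: "Lam \<subseteq> L m" for m using LamR by auto
  have LamX: "Lam \<subseteq> X" using LamL[of 0] L0 by simp
  have LamC: "compact Lam"
  proof -
    have "closed (\<Inter>(range L))" using Lcpt by (simp add: closed_INT compact_imp_closed)
    then have "compact (L 0 \<inter> \<Inter>(range L))" using Lcpt compact_Int_closed by blast
    moreover have "L 0 \<inter> \<Inter>(range L) = \<Inter>(range L)" by blast
    ultimately show ?thesis unfolding LamR by simp
  qed
  have LD: "Lam \<inter> Del = {}"
    using assms(4) setdist_eq_0I unfolding Lam_def Del_def by blast
  have Lpiece: "\<exists>i\<in>{1..N}. x \<in> P i" if "x \<in> Lam" for x
    using LD LamX that unfolding Del_def disc_set_def by blast
  have inv: "f x \<in> Lam" if x: "x \<in> Lam" for x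
  proof -
    obtain i where i: "i \<in> {1..N}" "x \<in> P i" using Lpiece x by blast
    have "f x \<in> L (Suc m)" for m
    proof -
      obtain A where A: "A \<in> atoms X f N P m" "x \<in> A" using LamL[of m] x unfolding L_def Lambda_n_def by blast
      have "F_map f P i A \<in> atoms X f N P (Suc m)" using A i by auto
      moreover have "f x \<in> F_map f P i A" using A i unfolding F_map_def
        by (meson IntI closure_subset image_eqI subsetD)
      ultimately show ?thesis unfolding L_def Lambda_n_def by blast
    qed
    then have "f x \<in> L m" for m using Ldec[of m] by blast
    then show ?thesis unfolding LamR by blast
  qed
  obtain U where U: "\<forall>i\<in>{1..N}. open (U i) \<and> P i = X \<inter> U i"
    using opn unfolding openin_open by metis
  obtain e where e: "e > 0" "\<And>x. x \<in> Lam \<Longrightarrow> \<exists>G \<in> U ` {1..N}. ball x e \<subseteq> G"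
  proof (rule Heine_Borel_lemma[OF LamC, of "U ` {1..N}"])
    show "Lam \<subseteq> \<Union>(U ` {1..N})" using Lpiece U by blast
    show "\<And>G. G \<in> U ` {1..N} \<Longrightarrow> open G" using U by blast
  qed blast
  have eball: "\<exists>i\<in>{1..N}. ball x e \<inter> X \<subseteq> P i" if "x \<in> Lam" for x
    using e(2)[OF that] U by blast
  obtain D where D: "\<forall>x\<in>X. \<forall>y\<in>X. dist x y \<le> D" "D \<ge> 0"
  proof -
    obtain a r where ar: "\<forall>y\<in>X. dist a y \<le> r"
      using compact_imp_bounded[OF assms(1)] unfolding bounded_def by blast
    have "\<forall>x\<in>X. \<forall>y\<in>X. dist x y \<le> 2 * max r 0"
      using ar by (smt (verit) dist_commute dist_triangle)
    then show ?thesis using that by fastforce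
  qed
  have pw: "\<forall>x\<in>A. \<forall>y\<in>A. dist x y \<le> lam ^ m * D" if "A \<in> atoms X f N P m" for A m
    using atoms_pw[OF contr lam0 D(1)] that by blast
  have small: "\<exists>m0. \<forall>m\<ge>m0. lam ^ m * D < r" if r0: "r > 0" for r
  proof -
    obtain m0 where m0: "lam ^ m0 < r / (D + 1)"
      using real_arch_pow_inv[of "r / (D+1)" lam] r0 D(2) lam1 by auto
    have "lam ^ m * D < r" if "m \<ge> m0" for m
    proof -
      have "lam ^ m * D \<le> lam ^ m0 * (D + 1)"
        using power_decreasing[OF that lam0] lam1 lam0 D(2)
        by (intro mult_mono) auto
      also have "\<dots> < r" using m0 D(2) by (simp add: field_simps)
      finally show ?thesis .
    qed
    then show ?thesis by blast
  qed
  have near: "\<exists>m0. \<forall>m\<ge>m0. L m \<subseteq> (\<Union>z\<in>Lam. ball z r)" if "r > 0" for r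
  proof -
    have "\<exists>m. L m \<subseteq> (\<Union>z\<in>Lam. ball z r)"
      by (rule compact_dec_eventually[of L, OF Ldec Lcpt]) (use that LamR in auto)
    then show ?thesis using Ldle by blast
  qed
  have bothm: "\<exists>m0. \<forall>m\<ge>m0. L m \<subseteq> (\<Union>z\<in>Lam. ball z r) \<and> lam ^ m * D < r" if r0: "r > 0" for r
  proof -
    obtain a where a: "\<forall>m\<ge>a. L m \<subseteq> (\<Union>z\<in>Lam. ball z r)" using near[OF r0] by blast
    obtain b where b: "\<forall>m\<ge>b. lam ^ m * D < r" using small[OF r0] by blast
    show ?thesis using a b by (intro exI[of _ "max a b"]) auto
  qed
  obtain m1 where m1: "\<forall>m\<ge>m1. L m \<subseteq> (\<Union>z\<in>Lam. ball z (e/2)) \<and> lam ^ m * D < e/2"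
    using bothm[of "e/2"] e(1) by auto
  have inpiece: "\<exists>i\<in>{1..N}. A \<subseteq> P i"
    if hm: "m \<ge> m1" "A \<in> atoms X f N P m" "A \<noteq> {}" for m A
  proof -
    obtain a where a: "a \<in> A" using hm(3) by blast
    have "a \<in> L m" using a hm(2) unfolding L_def Lambda_n_def by blast
    then have "a \<in> (\<Union>z\<in>Lam. ball z (e/2))" using m1 hm(1) by blast
    then obtain z where z: "z \<in> Lam" "dist z a < e/2" by auto
    obtain i where i: "i \<in> {1..N}" "ball z e \<inter> X \<subseteq> P i" using eball[OF z(1)] by blast
    have AX: "A \<subseteq> X" using atoms_subset[OF fX clX hm(2)] .
    have "A \<subseteq> ball z e"
    proof
      fix y assume y: "y \<in> A"
      have "dist a y < e/2" using pw[OF hm(2)] a y m1 hm(1) by (meson le_less_trans)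
      then show "y \<in> ball z e" using z(2) dist_triangle[of z y a] by simp
    qed
    then show ?thesis using i AX by blast
  qed
  define NA where "NA m = atoms X f N P m - {{}}" for m
  have NAfin: "finite (NA m)" for m unfolding NA_def using atoms_finite by blast
  have NAstep: "NA (Suc m) \<subseteq> (\<lambda>A. closure (f ` A)) ` NA m" if hm1: "m \<ge> m1" for m
  proof
    fix A' assume A': "A' \<in> NA (Suc m)"
    then obtain j A where jA: "A' = F_map f P j A" "A \<in> atoms X f N P m" "j \<in> {1..N}" "A' \<noteq> {}"
      unfolding NA_def by auto
    have Ane: "A \<noteq> {}" using jA by (auto simp: F_map_def)
    obtain i where i: "i \<in> {1..N}" "A \<subseteq> P i" using inpiece[OF hm1 jA(2) Ane] by blast
    have "j = i"
    proof (rule ccontr)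
      assume "j \<noteq> i"
      then have "A \<inter> P j = {}" using disj[OF i(1) jA(3)] i(2) by blast
      then show False using jA by (simp add: F_map_def)
    qed
    then have "A' = closure (f ` A)" using jA(1) i(2) by (simp add: F_map_def Int_absorb2)
    then show "A' \<in> (\<lambda>A. closure (f ` A)) ` NA m" using jA Ane unfolding NA_def by blast
  qed
  have NAcard: "card (NA m) \<le> card (NA m1)" if "m \<ge> m1" for m
    using that
  proof (induction m rule: dec_induct)
    case base then show ?case by simp
  next
    case (step m)
    have "card (NA (Suc m)) \<le> card ((\<lambda>A. closure (f ` A)) ` NA m)"
      using NAstep[OF step(1)] NAfin by (intro card_mono) auto
    also have "\<dots> \<le> card (NA m)" by (rule card_image_le[OF NAfin])
    finally show ?case using step(3) by linarith
  qed
  have Lcov: "\<exists>A\<in>NA m. x \<in> A" if "x \<in> Lam" for x m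
    using LamL[of m] that unfolding L_def Lambda_n_def NA_def by blast
  have finLam: "finite Lam"
  proof (rule ccontr)
    assume "infinite Lam"
    then obtain T where T: "T \<subseteq> Lam" "finite T" "card T = Suc (card (NA m1))"
      using infinite_arbitrarily_large by blast
    define eta where "eta = Min (insert 1 {dist x y | x y. x \<in> T \<and> y \<in> T \<and> x \<noteq> y})"
    have finpairs: "finite {dist x y | x y. x \<in> T \<and> y \<in> T \<and> x \<noteq> y}"
      using finite_pairdists[OF T(2)] .
    have eta0: "eta > 0" unfolding eta_def using finpairs by (subst Min_gr_iff) auto
    have etale: "eta \<le> dist x y" if "x \<in> T" "y \<in> T" "x \<noteq> y" for x y
      unfolding eta_def using finpairs that by (intro Min_le) auto
    obtain m2 where m2: "\<forall>m\<ge>m2. lam ^ m * D < eta" using small[OF eta0] by blast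
    define m where "m = max m1 m2"
    define g where "g x = (SOME A. A \<in> NA m \<and> x \<in> A)" for x
    have g: "g x \<in> NA m \<and> x \<in> g x" if "x \<in> T" for x
      unfolding g_def using Lcov[of x m] T(1) that by (metis (mono_tags, lifting) someI_ex subsetD)
    have "inj_on g T"
    proof (rule inj_onI, rule ccontr)
      fix x y assume xy: "x \<in> T" "y \<in> T" "g x = g y" "x \<noteq> y"
      have "g x \<in> atoms X f N P m" using g[OF xy(1)] unfolding NA_def by blast
      then have "dist x y \<le> lam ^ m * D" using pw g xy by metis
      also have "\<dots> < eta" using m2 unfolding m_def by auto
      finally show False using etale[OF xy(1,2,4)] by simp
    qed
    then have "card T \<le> card (NA m)" using g NAfin by (intro card_inj_on_le) auto
    also have "\<dots> \<le> card (NA m1)" using NAcard unfolding m_def by auto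
    finally show False using T(3) by simp
  qed
  have surj: "Lam \<subseteq> f ` Lam"
  proof
    fix y assume y: "y \<in> Lam"
    define eta where "eta = Min (insert 1 {dist x y | x y. x \<in> Lam \<and> y \<in> Lam \<and> x \<noteq> y})"
    have finpairs: "finite {dist x y | x y. x \<in> Lam \<and> y \<in> Lam \<and> x \<noteq> y}"
      using finite_pairdists[OF finLam] .
    have eta0: "eta > 0" unfolding eta_def using finpairs by (subst Min_gr_iff) auto
    have etale: "eta \<le> dist x y" if "x \<in> Lam" "y \<in> Lam" "x \<noteq> y" for x y
      unfolding eta_def using finpairs that by (intro Min_le) auto
    define r where "r = min (e/2) (eta/3)"
    have r0: "r > 0" using e(1) eta0 by (simp add: r_def)
    obtain m0 where m0: "\<forall>m\<ge>m0. L m \<subseteq> (\<Union>z\<in>Lam. ball z r) \<and> lam ^ m * D < r"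
      using bothm[OF r0] by blast
    have "y \<in> L (Suc m0)" using LamL y by blast
    then obtain A' where A': "A' \<in> atoms X f N P (Suc m0)" "y \<in> A'"
      unfolding L_def Lambda_n_def by blast
    then obtain j A where jA: "A' = F_map f P j A" "A \<in> atoms X f N P m0" "j \<in> {1..N}" by auto
    have "A \<inter> P j \<noteq> {}" using jA A'(2) by (auto simp: F_map_def)
    then obtain a where a: "a \<in> A" "a \<in> P j" by blast
    have "a \<in> L m0" using a jA(2) unfolding L_def Lambda_n_def by blast
    then have "a \<in> (\<Union>z\<in>Lam. ball z r)" using m0 by blast
    then obtain z where z: "z \<in> Lam" "dist z a < r" by auto
    obtain i where i: "i \<in> {1..N}" "ball z e \<inter> X \<subseteq> P i" using eball[OF z(1)] by blast
    have "dist z a < e" using z(2) e(1) unfolding r_def by linarith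
    then have "a \<in> ball z e" by simp
    then have "a \<in> P i" using i(2) PX[OF jA(3)] a(2) by blast
    then have "i = j" using disj[OF i(1) jA(3)] a(2) by blast
    have zP: "z \<in> P j" using i(2) \<open>i = j\<close> e(1) LamX z(1) by auto
    have d1: "dist (f z) (f a) < r"
    proof -
      have "dist (f z) (f a) \<le> lam * dist z a" using contr jA(3) zP a(2) by blast
      also have "\<dots> \<le> dist z a" using lam1 lam0 by (intro mult_left_le_one_le) auto
      finally show ?thesis using z(2) by simp
    qed
    have faA: "f a \<in> A'" using jA(1) a unfolding F_map_def
      by (meson IntI closure_subset image_eqI subsetD)
    have sm: "lam ^ Suc m0 * D < r" using m0 le_Suc_eq by blast
    have d2: "dist (f a) y < r"
      using pw[OF A'(1)] faA A'(2) sm by (meson le_less_trans)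
    have "r \<le> eta/3" by (simp add: r_def)
    then have "dist (f z) y < eta"
      using d1 d2 dist_triangle[of "f z" y "f a"] eta0 by linarith
    then have "f z = y" using etale[OF inv[OF z(1)] y] by linarith
    then show "y \<in> f ` Lam" using z(1) by blast
  qed
  have injL: "inj_on f Lam" using finite_surj_inj[OF finLam surj] .
  have orbL: "(f ^^ k) x \<in> Lam" if "x \<in> Lam" for x k
    by (induction k) (use that inv in auto)
  have cancel: "\<forall>x\<in>Lam. (f ^^ i) x = (f ^^ (i + d)) x \<longrightarrow> x = (f ^^ d) x" for i d
  proof (induction i)
    case 0 then show ?case by simp
  next
    case (Suc i)
    show ?case
    proof (intro ballI impI)
      fix x assume x: "x \<in> Lam" and eq: "(f ^^ Suc i) x = (f ^^ (Suc i + d)) x"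
      have "(f ^^ i) (f x) = (f ^^ (i + d)) (f x)"
        using eq by (simp add: funpow_Suc_right del: funpow.simps)
      then have "f x = (f ^^ d) (f x)" using Suc inv[OF x] by blast
      then have "f x = f ((f ^^ d) x)" by (simp add: funpow_swap1)
      then show "x = (f ^^ d) x" using injL x orbL[OF x, of d] by (meson inj_onD)
    qed
  qed
  have per: "periodic_point f x" if x: "x \<in> Lam" for x
  proof -
    have "\<not> inj (\<lambda>k. (f ^^ k) x)"
    proof
      assume "inj (\<lambda>k. (f ^^ k) x)"
      moreover have "finite (range (\<lambda>k. (f ^^ k) x))"
        using orbL[OF x] finLam by (meson finite_subset image_subsetI)
      ultimately show False using finite_imageD by blast
    qed
    then obtain i j where ij: "(f ^^ i) x = (f ^^ j) x" "i < j"
      unfolding inj_def by (metis linorder_neqE_nat)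
    have "x = (f ^^ (j - i)) x" using cancel[of i "j - i"] ij x by simp
    then show ?thesis unfolding periodic_point_def using ij(2) by (intro exI[of _ "j - i"]) auto
  qed
  show ?thesis
  proof (intro exI[of _ Lam] conjI ballI)
    show "finite Lam" by (rule finLam)
    show "x \<in> X" if "x \<in> Lam" for x using LamX that by blast
    show "periodic_point f x" if "x \<in> Lam" for x using per that .
    show "attractor X f N P = (\<Union>x\<in>Lam. orbit f x)"
    proof
      show "attractor X f N P \<subseteq> (\<Union>x\<in>Lam. orbit f x)"
        unfolding Lam_def[symmetric] orbit_def by (force intro: exI[of _ 0])
      show "(\<Union>x\<in>Lam. orbit f x) \<subseteq> attractor X f N P"
        unfolding Lam_def[symmetric] orbit_def using orbL by blast
    qed
  qed
qed

end
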